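(* Let $\overline{F}(x) = 1$ for $x < 0$ and $\overline{F}(x) = (\lfloor x \rfloor + 2)^{-1}$ for $x \geq 0$, and let $\theta \in (0,1)$. Then $\theta\, \overline{F}(x) \leq \overline{F}(x/\theta)$ holds for all $x \geq 0$ if and only if $$\theta \in \mathcal{A} := \left(0, \tfrac{1}{2}\right] \cup \left\{ \tfrac{k+1}{2k+1} : k \in \{1,2,3,\dots\} \right\}.$$ *)

theory Defs
  imports Complex_Main
begin

definition Fbar :: "real \<Rightarrow> real" where
  "Fbar x = (if x < 0 then 1 else 1 / (real_of_int \<lfloor>x\<rfloor> + 2))"

definition setA :: "real set" where
  "setA = {0<..1/2} \<union> {(real k + 1) / (2 * real k + 1) | k::nat. k \<ge> 1}"

end

theory Submission
  imports Defs
begin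

lemma key:
  fixes \<theta> x :: real
  assumes "0 < \<theta>" "x \<ge> 0"
  shows "\<theta> * Fbar x \<le> Fbar (x / \<theta>) \<longleftrightarrow>
         \<theta> * (real_of_int \<lfloor>x / \<theta>\<rfloor> + 2) \<le> real_of_int \<lfloor>x\<rfloor> + 2"
proof -
  have a: "real_of_int \<lfloor>x\<rfloor> + 2 > 0" using assms by linarith
  have b: "real_of_int \<lfloor>x / \<theta>\<rfloor> + 2 > 0"
  proof -
    have "x / \<theta> \<ge> 0" using assms by simp
    then show ?thesis by linarith
  qed
  have "x / \<theta> \<ge> 0" using assms by simp
  then show ?thesis using assms a b unfolding Fbar_def
    by (simp add: field_simps)
qed

theorem lemma13:
  fixes \<theta> :: real
  assumes "0 < \<theta>" and "\<theta> < 1"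
  shows "(\<forall>x::real. x \<ge> 0 \<longrightarrow> \<theta> * Fbar x \<le> Fbar (x / \<theta>)) \<longleftrightarrow> \<theta> \<in> setA"
proof
  assume H: "\<forall>x::real. x \<ge> 0 \<longrightarrow> \<theta> * Fbar x \<le> Fbar (x / \<theta>)"
  show "\<theta> \<in> setA"
  proof (rule ccontr)
    assume nA: "\<theta> \<notin> setA"
    have half: "\<theta> > 1/2" using nA assms unfolding setA_def by auto
    define q where "q = (1 - \<theta>) / (2*\<theta> - 1)"
    have qpos: "q \<ge> 0" using half assms unfolding q_def by simp
    define N :: nat where "N = nat \<lfloor>q\<rfloor> + 1"
    have N1: "real N - 1 \<le> q" using qpos unfolding N_def by linarith
    have N2: "real N > q" unfolding N_def using qpos by linarith
    have Npos': "N \<ge> 1" unfolding N_def by simp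
    have N3: "real N - 1 \<noteq> q"
    proof
      assume e: "real N - 1 = q"
      show False
      proof (cases "N = 1")
        case True
        then have "q = 0" using e by simp
        then show False using half assms unfolding q_def by simp
      next
        case False
        then have "N \<ge> 2" using Npos' by simp
        define k where "k = N - 1"
        have k1: "k \<ge> 1" "real k = q" using \<open>N \<ge> 2\<close> e unfolding k_def by auto
        have "real k * (2*\<theta> - 1) = 1 - \<theta>" using k1 half unfolding q_def by (simp add: field_simps)
        then have "\<theta> = (real k + 1) / (2 * real k + 1)"
          by (simp add: field_simps)
        then have "\<theta> \<in> setA" using k1 unfolding setA_def by blast
        then show False using nA by simp
      qed
    qed
    have L1: "(real N - 1) * (2*\<theta> - 1) < 1 - \<theta>"
    proof -
      have "real N - 1 < q" using N1 N3 by simp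
      then show ?thesis using half unfolding q_def by (simp add: field_simps)
    qed
    have L2: "real N * (2*\<theta> - 1) > 1 - \<theta>"
      using N2 half unfolding q_def by (simp add: field_simps)
    have Npos: "N \<ge> 1" unfolding N_def by simp
    define x where "x = (2 * real N - 1) * \<theta>"
    have x0: "x \<ge> 0" unfolding x_def using Npos assms by simp
    have fx: "\<lfloor>x / \<theta>\<rfloor> = 2 * int N - 1"
    proof -
      have "x / \<theta> = real_of_int (2 * int N - 1)" unfolding x_def using assms by simp
      then show ?thesis by (metis floor_of_int)
    qed
    have fl: "\<lfloor>x\<rfloor> = int N - 1"
    proof (rule floor_unique)
      have "(2*real N - 1) * (1/2) \<le> (2*real N - 1) * \<theta>"
        using half Npos by (intro mult_left_mono) auto
      then show "real_of_int (int N - 1) \<le> x" unfolding x_def by simp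
      show "x < real_of_int (int N - 1) + 1" unfolding x_def using L1 by (simp add: algebra_simps)
    qed
    have "\<theta> * (real_of_int \<lfloor>x / \<theta>\<rfloor> + 2) \<le> real_of_int \<lfloor>x\<rfloor> + 2"
      using key[OF assms(1) x0] H x0 by blast
    then have "\<theta> * (2 * real N + 1) \<le> real N + 1" using fx fl by (simp add: add.commute)
    then show False using L2 by (simp add: algebra_simps)
  qed
next
  assume A: "\<theta> \<in> setA"
  show "\<forall>x::real. x \<ge> 0 \<longrightarrow> \<theta> * Fbar x \<le> Fbar (x / \<theta>)"
  proof (intro allI impI)
    fix x :: real assume x0: "x \<ge> 0"
    define n where "n = \<lfloor>x\<rfloor>"
    define m where "m = \<lfloor>x / \<theta>\<rfloor>"
    have mx: "real_of_int m * \<theta> \<le> x"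
    proof -
      have "real_of_int m \<le> x / \<theta>" unfolding m_def by simp
      then show ?thesis using assms by (simp add: field_simps)
    qed
    have xn: "x < real_of_int n + 1" unfolding n_def by linarith
    have "\<theta> * (real_of_int m + 2) \<le> real_of_int n + 2"
    proof (cases "\<theta> \<le> 1/2")
      case True
      then show ?thesis using mx xn by (simp add: algebra_simps)
    next
      case False
      then obtain k :: nat where k: "k \<ge> 1" "\<theta> = (real k + 1) / (2 * real k + 1)"
        using A unfolding setA_def by auto
      have d: "2 * real k + 1 > 0" by simp
      have "real_of_int m * (real k + 1) < (real_of_int n + 1) * (2 * real k + 1)"
      proof -
        have "real_of_int m * \<theta> < real_of_int n + 1" using mx xn by simp
        then have "real_of_int m * \<theta> * (2 * real k + 1) < (real_of_int n + 1) * (2 * real k + 1)"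
          using d by simp
        moreover have "real_of_int m * \<theta> * (2 * real k + 1) = real_of_int m * (real k + 1)"
        proof -
          have "\<theta> * (2 * real k + 1) = real k + 1" using k(2) d by simp
          then show ?thesis by (simp only: mult.assoc)
        qed
        ultimately show ?thesis by simp
      qed
      then have "real_of_int (m * (int k + 1)) < real_of_int ((n + 1) * (2 * int k + 1))"
        by (simp only: of_int_mult of_int_add of_int_of_nat_eq of_int_1 of_int_numeral)
      then have "m * (int k + 1) < (n + 1) * (2 * int k + 1)" by (simp only: of_int_less_iff)
      then have "(m + 2) * (int k + 1) \<le> (n + 2) * (2 * int k + 1)" by (simp add: algebra_simps)
      then have "real_of_int ((m + 2) * (int k + 1)) \<le> real_of_int ((n + 2) * (2 * int k + 1))"
        by (simp only: of_int_le_iff)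
      then have "(real_of_int m + 2) * (real k + 1) \<le> (real_of_int n + 2) * (2 * real k + 1)"
        by (simp only: of_int_mult of_int_add of_int_of_nat_eq of_int_1 of_int_numeral)
      moreover have "\<theta> * (2 * real k + 1) = real k + 1" using k(2) d by simp
      ultimately have "(real_of_int m + 2) * (\<theta> * (2 * real k + 1)) \<le> (real_of_int n + 2) * (2 * real k + 1)"
        by simp
      then have "(\<theta> * (real_of_int m + 2)) * (2 * real k + 1) \<le> (real_of_int n + 2) * (2 * real k + 1)"
        by (simp add: algebra_simps)
      then show ?thesis using d by (simp only: mult_le_cancel_right_pos)
    qed
    then show "\<theta> * Fbar x \<le> Fbar (x / \<theta>)" using key[OF assms(1) x0] unfolding m_def n_def by blast
  qed
qed

end
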